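(* Let $\mathbf{M}$ be a four-dimensional globally hyperbolic spacetime, $x\in\mathbf{M}$, and $n\geq1$ an integer. Suppose the renormalization polynomials of the locally covariant Wick powers satisfy $C_{2m}=(2m-1)!!\,\alpha^{m}R^{m}$ for all $m=1,\dots,n$, where $C_2=\alpha R$. Then a quasi-free Hadamard state $\omega$ on $\mathbf{M}$ is $\mathbf{T}_{2n}(x)$-thermal if and only if it is $\mathbf{T}_{2}(x)$-thermal. If moreover $n\geq 2$, then such a state has a sharp local temperature at $x$, i.e.\ the witnessing measure $\rho_x$ is a Dirac measure.
   Context: Consider the free massless conformally coupled scalar field on a globally hyperbolic spacetime $\mathbf{M}$ (signature $(-,+,+,+)$), with field equation $(-\Box+\tfrac16 R)\phi=0$, $R$ the Ricci scalar. For a Hadamard state, $:\!\phi^k\!:_h(x)$ denotes the Wick power obtained by point splitting and subtracting the Hadamard parametrix. The locally covariant Wick powers are $:\!\phi^{k}\!:_{\mathbf{M}}(x)=:\!\phi^{k}\!:_h(x)+\sum_{j=0}^{k-2}\binom{k}{j}C_{k-j}(x)\,:\!\phi^{j}\!:_h(x)$, where the $C_i$ are locally covariant polynomials with real coefficients in the metric and curvature with appropriate scaling dimension; in particular $C_2=\alpha R$ for a real constant $\alpha$. A state is quasi-free if its odd $n$-point functions vanish and its even ones are sums over pairings of products of two-point functions. In Minkowski spacetime, let $\omega_\beta$ ($\beta>0$) be the global thermal equilibrium state at inverse temperature $\beta$ of the free massless field; it satisfies $\omega_\beta(:\!\phi^{2k}\!:(0))=\frac{(2k-1)!!}{12^k\beta^{2k}}$.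 Let $\mathbf{T}_{2n}=\{\mathbf{1},:\!\phi^2\!:,\dots,:\!\phi^{2n}\!:\}$. A state $\omega$ on $\mathbf{M}$ is $\mathbf{T}_{2n}(x)$-thermal if there is a probability measure $\rho_x$ on $(0,\infty)$ with $\omega(:\!\phi^{2k}\!:_{\mathbf{M}}(x))=\int d\rho_x(\beta)\,\frac{(2k-1)!!}{12^k\beta^{2k}}$ for all $k=0,\dots,n$. It has a sharp local temperature at $x$ if $\rho_x$ is a Dirac measure. *)

theory Defs
  imports "HOL-Probability.Probability"
begin

text \<open>Odd double factorial: odd_dfact k = (2k-1)!!, with (-1)!! = 1.\<close>
definition odd_dfact :: "nat \<Rightarrow> real" where
  "odd_dfact k = (\<Prod>i<k. real (2 * i + 1))"

definition pairings :: "'a set \<Rightarrow> 'a set set set" where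
  "pairings A = {P. (\<forall>b\<in>P. b \<subseteq> A \<and> card b = 2) \<and> \<Union>P = A \<and> disjoint P}"

text \<open>Quasi-free Hadamard state, evaluated at coincident points x via Hadamard point
splitting: hw k = omega(:phi^k:_h(x)).  For a Hadamard state the two-point function minus
the Hadamard parametrix is smooth, with coincidence value w at x; the quasi-free property
(odd n-point functions vanish, even ones are sums over pairings of products of two-point
functions) then gives the expectation of the point-split, parametrix-subtracted product of
k fields as the sum over pairings of products of w.\<close>
definition quasi_free_hadamard_at :: "(nat \<Rightarrow> real) \<Rightarrow> bool" where
  "quasi_free_hadamard_at hw \<longleftrightarrow>
     (\<exists>w::real. \<forall>k. hw k = (\<Sum>P\<in>pairings {..<k}. \<Prod>b\<in>P. w))"

text \<open>Locally covariant Wick powers at x: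
  :phi^k:_M(x) = :phi^k:_h(x) + sum_{j=0}^{k-2} binom(k,j) C_{k-j}(x) :phi^j:_h(x),
  here in expectation value in the state (C i = C_i(x)).\<close>
definition cov_wick :: "(nat \<Rightarrow> real) \<Rightarrow> (nat \<Rightarrow> real) \<Rightarrow> nat \<Rightarrow> real" where
  "cov_wick C hw k = hw k + (\<Sum>j\<in>{j. j + 2 \<le> k}. real (k choose j) * C (k - j) * hw j)"

text \<open>Thermal expectation omega_beta(:phi^{2k}:(0)) = (2k-1)!!/(12^k beta^{2k}).\<close>
definition therm_moment :: "nat \<Rightarrow> real \<Rightarrow> real" where
  "therm_moment k \<beta> = odd_dfact k / (12 ^ k * \<beta> ^ (2 * k))"

text \<open>rho witnesses T_{2n}(x)-thermality of the state with values
  v j = omega(:phi^j:_M(x)): rho is a probability measure on (0,inf).\<close>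
definition thermal_witness :: "(nat \<Rightarrow> real) \<Rightarrow> nat \<Rightarrow> real measure \<Rightarrow> bool" where
  "thermal_witness v n \<rho> \<longleftrightarrow>
     prob_space \<rho> \<and> sets \<rho> = sets (borel :: real measure) \<and> measure \<rho> {0<..} = 1 \<and>
     (\<forall>k\<le>n. integrable \<rho> (therm_moment k) \<and> (\<integral>\<beta>. therm_moment k \<beta> \<partial>\<rho>) = v (2 * k))"

definition T_thermal :: "(nat \<Rightarrow> real) \<Rightarrow> nat \<Rightarrow> bool" where
  "T_thermal v n \<longleftrightarrow> (\<exists>\<rho>. thermal_witness v n \<rho>)"

definition is_dirac_pos :: "real measure \<Rightarrow> bool" where
  "is_dirac_pos \<rho> \<longleftrightarrow> (\<exists>\<beta>0>0. \<rho> = return borel \<beta>0)"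

end

theory Submission
  imports Defs
begin

lemma pairing_card:
  assumes "P \<in> pairings A" "finite A"
  shows "card A = 2 * card P"
proof -
  have Pb: "\<forall>b\<in>P. b \<subseteq> A \<and> card b = 2" "\<Union>P = A" "disjoint P"
    using assms(1) unfolding pairings_def by auto
  have fP: "finite P" using Pb(2) assms(2) by (simp add: finite_UnionD)
  have "card A = (\<Sum>b\<in>P. card b)"
    using card_Union_disjoint[OF Pb(3)] Pb fP assms(2)
    by (metis finite_subset)
  also have "\<dots> = 2 * card P" using Pb(1) by simp
  finally show ?thesis .
qed

lemma pairings_empty: "pairings {} = {{}}"
  unfolding pairings_def by auto

lemma pairings_decomp:
  assumes "a \<in> A"
  shows "pairings A = (\<Union>b\<in>A-{a}. insert {a,b} ` pairings (A - {a,b}))"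
proof
  show "pairings A \<subseteq> (\<Union>b\<in>A-{a}. insert {a,b} ` pairings (A - {a,b}))"
  proof
    fix P assume P: "P \<in> pairings A"
    have Pb: "\<forall>b\<in>P. b \<subseteq> A \<and> card b = 2" "\<Union>P = A" "disjoint P"
      using P unfolding pairings_def by auto
    obtain b0 where b0: "b0 \<in> P" "a \<in> b0" using Pb(2) assms by auto
    obtain x y where xy: "b0 = {x,y}" "x \<noteq> y" using Pb(1) b0(1) card_2_iff by metis
    obtain b where b: "b0 = {a,b}" "b \<noteq> a" using xy b0(2) by auto
    have bA: "b \<in> A - {a}" using b Pb(1) b0(1) by auto
    have "P - {b0} \<in> pairings (A - {a,b})"
    proof -
      have "\<forall>c\<in>P - {b0}. c \<inter> b0 = {}" using Pb(3) b0(1)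
        unfolding pairwise_def disjnt_def by auto
      then have "\<forall>c\<in>P - {b0}. c \<subseteq> A - {a,b} \<and> card c = 2" using Pb(1) b by auto
      moreover have "\<Union>(P - {b0}) = A - {a,b}"
      proof
        show "\<Union>(P - {b0}) \<subseteq> A - {a,b}" using calculation by auto
        show "A - {a,b} \<subseteq> \<Union>(P - {b0})" using Pb(2) b by auto
      qed
      moreover have "disjoint (P - {b0})" using Pb(3) by (simp add: pairwise_def)
      ultimately show ?thesis unfolding pairings_def by auto
    qed
    moreover have "P = insert {a,b} (P - {b0})" using b0 b by auto
    ultimately show "P \<in> (\<Union>b\<in>A-{a}. insert {a,b} ` pairings (A - {a,b}))"
      using bA by blast
  qed
next
  show "(\<Union>b\<in>A-{a}. insert {a,b} ` pairings (A - {a,b})) \<subseteq> pairings A"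
  proof (intro subsetI)
    fix P assume "P \<in> (\<Union>b\<in>A-{a}. insert {a,b} ` pairings (A - {a,b}))"
    then obtain b Q where b: "b \<in> A" "b \<noteq> a" and Q: "Q \<in> pairings (A - {a,b})"
      and PQ: "P = insert {a,b} Q" by auto
    have Qb: "\<forall>c\<in>Q. c \<subseteq> A - {a,b} \<and> card c = 2" "\<Union>Q = A - {a,b}" "disjoint Q"
      using Q unfolding pairings_def by auto
    have "\<forall>c\<in>insert {a,b} Q. c \<subseteq> A \<and> card c = 2" using Qb(1) b assms by auto
    moreover have "\<Union>(insert {a,b} Q) = A" using Qb(2) b assms by auto
    moreover have "disjoint (insert {a,b} Q)"
      unfolding pairwise_insert using Qb(3) Qb(1)
      by (auto simp: disjnt_def)
    ultimately show "P \<in> pairings A" unfolding pairings_def PQ by auto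
  qed
qed

lemma finite_pairings: "finite A \<Longrightarrow> finite (pairings A)"
  by (rule finite_subset[of _ "Pow (Pow A)"]) (auto simp: pairings_def)

lemma card_pairings:
  "finite A \<Longrightarrow> card (pairings A) = (if even (card A) then odd_dfact (card A div 2) else 0)"
proof (induction "card A" arbitrary: A rule: less_induct)
  case less
  show ?case
  proof (cases "A = {}")
    case True then show ?thesis by (simp add: pairings_empty odd_dfact_def)
  next
    case False
    then obtain a where a: "a \<in> A" by auto
    have IH: "\<And>b. b \<in> A - {a} \<Longrightarrow> real (card (pairings (A - {a,b}))) =
       (if even (card A - 2) then odd_dfact ((card A - 2) div 2) else 0)"
    proof -
      fix b assume b: "b \<in> A - {a}"
      have "card {a,b} = 2" using b by auto
      then have c: "card (A - {a,b}) = card A - 2" using a b less.prems by (simp add: card_Diff_subset)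
      have "card A > 0" using a less.prems card_gt_0_iff by blast
      then have lt: "card (A - {a,b}) < card A" unfolding c by simp
      have "finite (A - {a,b})" using less.prems by simp
      from less.hyps[OF lt this] have "card (pairings (A - {a, b})) =
        (if even (card (A - {a, b})) then odd_dfact (card (A - {a, b}) div 2) else 0)" .
      then show "?thesis b" unfolding c by simp
    qed
    have disj: "disjoint_family_on (\<lambda>b. insert {a,b} ` pairings (A - {a,b})) (A - {a})"
      unfolding disjoint_family_on_def
    proof (intro ballI impI)
      fix b c assume bc: "b \<in> A - {a}" "c \<in> A - {a}" "b \<noteq> c"
      show "insert {a,b} ` pairings (A - {a,b}) \<inter> insert {a,c} ` pairings (A - {a,c}) = {}"
      proof (rule ccontr)
        assume "\<not> ?thesis"
        then obtain Q1 Q2 where Q: "Q1 \<in> pairings (A - {a,b})" "Q2 \<in> pairings (A - {a,c})"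
          "insert {a,b} Q1 = insert {a,c} Q2" by auto
        have "{a,b} \<noteq> {a,c}" using bc by (metis doubleton_eq_iff)
        then have "{a,b} \<in> Q2" using Q(3) by (metis insertI1 insertE)
        then have "{a,b} \<subseteq> A - {a,c}" using Q(2) unfolding pairings_def by auto
        then show False by auto
      qed
    qed
    have inj: "\<And>b. b \<in> A - {a} \<Longrightarrow> inj_on (insert {a,b}) (pairings (A - {a,b}))"
    proof -
      fix b assume "b \<in> A - {a}"
      have "\<And>Q. Q \<in> pairings (A - {a,b}) \<Longrightarrow> {a,b} \<notin> Q" unfolding pairings_def by auto
      then show "inj_on (insert {a,b}) (pairings (A - {a,b}))"
        unfolding inj_on_def by (metis insert_ident)
    qed
    define r where "r = (if even (card A - 2) then odd_dfact ((card A - 2) div 2) else 0)"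
    have fin: "\<And>b. finite (insert {a,b} ` pairings (A - {a,b}))"
      using less.prems finite_pairings by (meson finite_Diff finite_imageI)
    have "card (pairings A) = (\<Sum>b\<in>A-{a}. card (insert {a,b} ` pairings (A - {a,b})))"
      unfolding pairings_decomp[OF a]
      by (rule card_UN_disjoint'[OF disj]) (use less.prems fin in auto)
    then have "real (card (pairings A)) = (\<Sum>b\<in>A-{a}. real (card (insert {a,b} ` pairings (A - {a,b}))))"
      by simp
    also have "\<dots> = (\<Sum>b\<in>A-{a}. r)"
    proof (rule sum.cong[OF refl])
      fix b assume b: "b \<in> A - {a}"
      have "card (insert {a,b} ` pairings (A - {a,b})) = card (pairings (A - {a,b}))"
        by (rule card_image[OF inj[OF b]])
      then show "real (card (insert {a,b} ` pairings (A - {a,b}))) = r"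
        using IH[OF b] unfolding r_def by simp
    qed
    also have "\<dots> = real (card A - 1) * r"
      using a less.prems by simp
    also have "\<dots> = (if even (card A) then odd_dfact (card A div 2) else 0)"
    proof -
      obtain m where m: "card A = Suc m" using a less.prems by (metis card_Suc_Diff1)
      show ?thesis
      proof (cases m)
        case 0 then show ?thesis using m by (simp add: r_def)
      next
        case (Suc k)
        have A2: "card A = Suc (Suc k)" using m Suc by simp
        show ?thesis
        proof (cases "even k")
          case True
          then obtain t where t: "k = 2 * t" by blast
          have "odd_dfact (Suc t) = odd_dfact t * real (2 * t + 1)"
            by (simp add: odd_dfact_def)
          moreover have "Suc (Suc k) div 2 = Suc t" using t by simp
          ultimately show ?thesis unfolding r_def A2 using t by (simp add: algebra_simps)
        next
          case False
          then show ?thesis unfolding r_def A2 by simp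
        qed
      qed
    qed
    finally show ?thesis .
  qed
qed


lemma hw_formula:
  assumes "quasi_free_hadamard_at hw"
  obtains w where "\<And>k. hw k = (if even k then odd_dfact (k div 2) * w ^ (k div 2) else 0)"
proof -
  obtain w where w: "\<And>k. hw k = (\<Sum>P\<in>pairings {..<k}. \<Prod>b\<in>P. w)"
    using assms unfolding quasi_free_hadamard_at_def by blast
  have "hw k = (if even k then odd_dfact (k div 2) * w ^ (k div 2) else 0)" for k
  proof -
    have "hw k = (\<Sum>P\<in>pairings {..<k}. w ^ (k div 2))"
    proof -
      have "\<And>P. P \<in> pairings {..<k} \<Longrightarrow> (\<Prod>b\<in>P. w) = w ^ (k div 2)"
      proof -
        fix P assume "P \<in> pairings {..<k}"
        then have "k = 2 * card P" using pairing_card[of _ "{..<k}"] by simp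
        then have "k div 2 = card P" by simp
        then show "(\<Prod>b\<in>P. w) = w ^ (k div 2)" by simp
      qed
      then show ?thesis unfolding w by (rule sum.cong[OF refl])
    qed
    also have "\<dots> = real (card (pairings {..<k})) * w ^ (k div 2)" by simp
    also have "\<dots> = (if even k then odd_dfact (k div 2) * w ^ (k div 2) else 0)"
      using card_pairings[of "{..<k}"] by simp
    finally show ?thesis .
  qed
  then show ?thesis using that by blast
qed

lemma odf_fact: "odd_dfact m * 2 ^ m * fact m = fact (2 * m)"
proof (induction m)
  case 0 then show ?case by (simp add: odd_dfact_def)
next
  case (Suc m)
  have e: "odd_dfact (Suc m) = odd_dfact m * (2 * m + 1)" by (simp add: odd_dfact_def)
  have f: "fact (2 * Suc m) = (fact (2 * m) :: real) * (2 * m + 1) * (2 * m + 2)"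
    by (simp add: algebra_simps)
  have "odd_dfact (Suc m) * 2 ^ Suc m * fact (Suc m)
     = (odd_dfact m * 2 ^ m * fact m) * (2 * m + 1) * (2 * m + 2)"
    unfolding e by (simp add: algebra_simps)
  then show ?case using Suc f by simp
qed

lemma odf_eq: "odd_dfact m = fact (2 * m) / (2 ^ m * fact m)"
  using odf_fact[of m] by (simp add: field_simps)

lemma coeff_id:
  assumes "i \<le> k"
  shows "real ((2 * k) choose (2 * i)) * odd_dfact (k - i) * odd_dfact i = odd_dfact k * real (k choose i)"
proof -
  have k2: "2 * k - 2 * i = 2 * (k - i)" by simp
  have p: "(2::real) ^ k = 2 ^ (k - i) * 2 ^ i" using assms by (simp add: power_add[symmetric])
  show ?thesis
    unfolding binomial_fact[OF assms] binomial_fact[of "2*i" "2*k", simplified, OF assms] odf_eq k2 p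
    by (simp add: field_simps)
qed

lemma cov_formula:
  fixes C hw :: "nat \<Rightarrow> real"
  assumes hw: "\<And>k. hw k = (if even k then odd_dfact (k div 2) * w ^ (k div 2) else 0)"
    and Ce: "\<forall>m\<in>{1..n}. C (2 * m) = odd_dfact m * \<alpha> ^ m * R ^ m"
    and kn: "k \<le> n"
  shows "cov_wick C hw (2 * k) = odd_dfact k * (w + \<alpha> * R) ^ k"
proof -
  define f where "f j = real ((2 * k) choose j) * C (2 * k - j) * hw j" for j
  have "(\<Sum>j\<in>{j. j + 2 \<le> 2 * k}. f j) = (\<Sum>j\<in>(\<lambda>i. 2 * i) ` {..<k}. f j)"
  proof (rule sum.mono_neutral_right)
    show "finite {j. j + 2 \<le> 2 * k}" by (rule finite_subset[of _ "{..2*k}"]) auto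
    show "(\<lambda>i. 2 * i) ` {..<k} \<subseteq> {j. j + 2 \<le> 2 * k}" by auto
    show "\<forall>j\<in>{j. j + 2 \<le> 2 * k} - (\<lambda>i. 2 * i) ` {..<k}. f j = 0"
    proof
      fix j assume j: "j \<in> {j. j + 2 \<le> 2 * k} - (\<lambda>i. 2 * i) ` {..<k}"
      have "odd j"
      proof
        assume "even j"
        then obtain i where "j = 2 * i" by blast
        then show False using j by auto
      qed
      then show "f j = 0" unfolding f_def hw by simp
    qed
  qed
  also have "\<dots> = (\<Sum>i<k. f (2 * i))"
    by (subst sum.reindex) (auto simp: inj_on_def)
  also have "\<dots> = (\<Sum>i<k. odd_dfact k * (real (k choose i) * w ^ i * (\<alpha> * R) ^ (k - i)))"
  proof (rule sum.cong[OF refl])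
    fix i assume i: "i \<in> {..<k}"
    have "C (2 * k - 2 * i) = odd_dfact (k - i) * (\<alpha> * R) ^ (k - i)"
    proof -
      have "k - i \<in> {1..n}" using i kn by auto
      then have "C (2 * (k - i)) = odd_dfact (k - i) * \<alpha> ^ (k - i) * R ^ (k - i)"
        using Ce by blast
      moreover have "2 * k - 2 * i = 2 * (k - i)" by simp
      ultimately show ?thesis by (simp add: power_mult_distrib)
    qed
    then have "f (2 * i) = real ((2 * k) choose (2 * i)) * odd_dfact (k - i) * odd_dfact i * w ^ i * (\<alpha> * R) ^ (k - i)"
      unfolding f_def hw by simp
    then show "f (2 * i) = odd_dfact k * (real (k choose i) * w ^ i * (\<alpha> * R) ^ (k - i))"
      using coeff_id[of i k] i by simp
  qed
  finally have S: "(\<Sum>j\<in>{j. j + 2 \<le> 2 * k}. f j) = (\<Sum>i<k. odd_dfact k * (real (k choose i) * w ^ i * (\<alpha> * R) ^ (k - i)))" .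
  have "cov_wick C hw (2 * k) = odd_dfact k * w ^ k + (\<Sum>i<k. odd_dfact k * (real (k choose i) * w ^ i * (\<alpha> * R) ^ (k - i)))"
    unfolding cov_wick_def S[unfolded f_def] by (simp add: hw)
  also have "\<dots> = odd_dfact k * (\<Sum>i\<le>k. real (k choose i) * w ^ i * (\<alpha> * R) ^ (k - i))"
    by (simp add: lessThan_Suc_atMost[symmetric] sum_distrib_left algebra_simps)
  also have "\<dots> = odd_dfact k * (w + \<alpha> * R) ^ k" by (simp add: binomial_ring)
  finally show ?thesis .
qed


lemma tm_meas: "sets M = sets borel \<Longrightarrow> therm_moment k \<in> borel_measurable M"
proof -
  assume sM: "sets M = sets borel"
  have "therm_moment k \<in> borel_measurable borel" unfolding therm_moment_def by measurable
  then show ?thesis using measurable_cong_sets[OF sM refl] by blast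
qed

lemma tm1: "therm_moment 1 \<beta> = 1 / (12 * \<beta>^2)"
  by (simp add: therm_moment_def odd_dfact_def)

lemma tm2: "therm_moment 2 \<beta> = 3 * (therm_moment 1 \<beta>)^2"
  by (simp add: therm_moment_def odd_dfact_def power2_eq_square power_mult_distrib field_simps
        numeral_eq_Suc)

lemma tm_nonneg: "0 \<le> therm_moment k \<beta>"
proof -
  have "0 \<le> odd_dfact k" unfolding odd_dfact_def by (rule prod_nonneg) auto
  moreover have "0 \<le> (\<beta>^2)^k" by simp
  ultimately show ?thesis unfolding therm_moment_def by (simp add: power_mult)
qed

lemma witness_pos:
  assumes W: "thermal_witness v n \<rho>" and n: "n \<ge> 1"
  shows "v 2 > 0" and "AE \<beta> in \<rho>. \<beta> > 0"
proof -
  have P: "prob_space \<rho>" and S: "sets \<rho> = sets borel" and M1: "measure \<rho> {0<..} = 1"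
    and I: "integrable \<rho> (therm_moment 1)" and E: "(\<integral>\<beta>. therm_moment 1 \<beta> \<partial>\<rho>) = v 2"
    using W n unfolding thermal_witness_def by auto
  interpret prob_space \<rho> by (rule P)
  show AEp: "AE \<beta> in \<rho>. \<beta> > 0" using AE_prob_1[OF M1] by simp
  show "v 2 > 0"
  proof (rule ccontr)
    assume "\<not> v 2 > 0"
    moreover have "v 2 \<ge> 0" unfolding E[symmetric]
      by (rule integral_nonneg_AE) (simp add: tm_nonneg)
    ultimately have "integral\<^sup>L \<rho> (therm_moment 1) = 0" using E by simp
    then have "AE \<beta> in \<rho>. therm_moment 1 \<beta> = 0"
      using integral_nonneg_eq_0_iff_AE[OF I] by (simp add: tm_nonneg)
    with AEp have "AE \<beta> in \<rho>. False" by eventually_elim (simp add: therm_moment_def odd_dfact_def)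
    then show False using AE_False by simp
  qed
qed

lemma dirac_witness:
  assumes u: "u > 0" and V: "\<And>k. k \<le> n \<Longrightarrow> v (2 * k) = odd_dfact k * u ^ k"
  shows "thermal_witness v n (return borel (1 / sqrt (12 * u)))"
proof -
  define b where "b = 1 / sqrt (12 * u)"
  have b0: "b > 0" using u by (simp add: b_def)
  have bb: "12 * b^2 = 1 / u" using u by (simp add: b_def power_divide)
  interpret prob_space "return borel b" by (rule prob_space_return) simp
  have tmb: "therm_moment k b = odd_dfact k * u ^ k" for k
  proof -
    have "12 ^ k * b ^ (2 * k) = (12 * b^2) ^ k" by (simp add: power_mult power_mult_distrib)
    also have "\<dots> = 1 / u ^ k" using bb by (simp add: power_divide)
    finally show ?thesis unfolding therm_moment_def by simp
  qed
  have "integrable (return borel b) (therm_moment k) \<and>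
        (\<integral>\<beta>. therm_moment k \<beta> \<partial>return borel b) = therm_moment k b" for k
  proof
    have "integrable (return borel b) (\<lambda>_. therm_moment k b)" by simp
    then show "integrable (return borel b) (therm_moment k)"
    proof (rule integrable_cong_AE_imp)
      have "Measurable.pred borel (\<lambda>x. therm_moment k b = therm_moment k x)"
        unfolding therm_moment_def by measurable
      then show "AE x in return borel b. therm_moment k b = therm_moment k x"
        by (subst AE_return) auto
      show "therm_moment k \<in> borel_measurable (return borel b)" by (rule tm_meas) simp
    qed
    show "(\<integral>\<beta>. therm_moment k \<beta> \<partial>return borel b) = therm_moment k b"
      by (rule integral_return) (auto simp: tm_meas)
  qed
  then show ?thesis unfolding thermal_witness_def b_def[symmetric]
    using prob_space_axioms b0 V tmb by (simp add: measure_return)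
qed


lemma witness_dirac:
  assumes W: "thermal_witness v n \<rho>" and n: "n \<ge> 2" and v4: "v 4 = 3 * (v 2)^2"
  shows "is_dirac_pos \<rho>"
proof -
  have P: "prob_space \<rho>" and S: "sets \<rho> = sets borel"
    and I1: "integrable \<rho> (therm_moment 1)" and E1: "(\<integral>\<beta>. therm_moment 1 \<beta> \<partial>\<rho>) = v 2"
    and I2: "integrable \<rho> (therm_moment 2)" and E2: "(\<integral>\<beta>. therm_moment 2 \<beta> \<partial>\<rho>) = v 4"
    using W n unfolding thermal_witness_def by (auto dest: spec[of _ 1] spec[of _ 2])
  interpret prob_space \<rho> by (rule P)
  have u: "v 2 > 0" and AEp: "AE \<beta> in \<rho>. \<beta> > 0" using witness_pos[OF W] n by auto
  define u where "u = v 2"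
  define X where "X = therm_moment 1"
  have IX: "integrable \<rho> X" and EX: "integral\<^sup>L \<rho> X = u" using I1 E1 by (auto simp: X_def u_def)
  have "integrable \<rho> (\<lambda>\<beta>. 3 * (X \<beta>)^2)" using I2 unfolding X_def tm2[symmetric] .
  then have IX2: "integrable \<rho> (\<lambda>\<beta>. (X \<beta>)^2)"
    using integrable_mult_left_iff[of \<rho> 3 "\<lambda>\<beta>. (X \<beta>)^2"] by simp
  have "(\<integral>\<beta>. 3 * (X \<beta>)^2 \<partial>\<rho>) = 3 * u^2" using E2 v4 unfolding X_def tm2[symmetric] u_def by simp
  then have EX2: "(\<integral>\<beta>. (X \<beta>)^2 \<partial>\<rho>) = u^2" by simp
  have eqf: "(\<lambda>\<beta>. (X \<beta> - u)^2) = (\<lambda>\<beta>. (X \<beta>)^2 - (2 * u * X \<beta> - u^2))"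
    by (auto simp: power2_eq_square algebra_simps)
  have Iq: "integrable \<rho> (\<lambda>\<beta>. (X \<beta> - u)^2)" unfolding eqf using IX IX2 by auto
  have "(\<integral>\<beta>. (X \<beta> - u)^2 \<partial>\<rho>) = u^2 - (2 * u * u - u^2)"
    unfolding eqf using IX IX2 EX EX2 by (simp add: prob_space)
  then have "(\<integral>\<beta>. (X \<beta> - u)^2 \<partial>\<rho>) = 0" by (simp add: power2_eq_square)
  then have "AE \<beta> in \<rho>. (X \<beta> - u)^2 = 0" using integral_nonneg_eq_0_iff_AE[OF Iq] by simp
  define b where "b = 1 / sqrt (12 * u)"
  have b0: "b > 0" using u by (simp add: b_def u_def)
  have AEb: "AE \<beta> in \<rho>. \<beta> = b"
    using \<open>AE \<beta> in \<rho>. (X \<beta> - u)^2 = 0\<close> AEp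
  proof eventually_elim
    case (elim \<beta>)
    then have "1 / (12 * \<beta>^2) = u" by (simp add: X_def therm_moment_def odd_dfact_def)
    then have "\<beta>^2 = 1 / (12 * u)" using u elim(2) by (auto simp: field_simps u_def)
    then have "\<beta> = sqrt (1 / (12 * u))" using elim(2) by (metis abs_of_pos real_sqrt_abs)
    then show "\<beta> = b" by (simp add: b_def real_sqrt_divide)
  qed
  have "\<rho> = return borel b"
  proof (rule measure_eqI)
    show "sets \<rho> = sets (return borel b)" using S by simp
    fix A assume A: "A \<in> sets \<rho>"
    have "emeasure \<rho> A = (\<integral>\<^sup>+ \<beta>. indicator A \<beta> \<partial>\<rho>)" using A by simp
    also have "\<dots> = (\<integral>\<^sup>+ \<beta>. indicator A b \<partial>\<rho>)"
      by (rule nn_integral_cong_AE) (use AEb in auto)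
    also have "\<dots> = indicator A b" using emeasure_space_1 by simp
    also have "\<dots> = emeasure (return borel b) A" using A S by simp
    finally show "emeasure \<rho> A = emeasure (return borel b) A" .
  qed
  then show ?thesis unfolding is_dirac_pos_def using b0 by blast
qed


theorem corollary1:
  fixes n :: nat and \<alpha> R :: real and C hw :: "nat \<Rightarrow> real"
  assumes n_ge: "n \<ge> 1"
    and C2: "C 2 = \<alpha> * R"
    and C_even: "\<forall>m\<in>{1..n}. C (2 * m) = odd_dfact m * \<alpha> ^ m * R ^ m"
    and qf: "quasi_free_hadamard_at hw"
  shows "(T_thermal (cov_wick C hw) n \<longleftrightarrow> T_thermal (cov_wick C hw) 1)
         \<and> (n \<ge> 2 \<longrightarrow> (\<forall>\<rho>. thermal_witness (cov_wick C hw) n \<rho> \<longrightarrow> is_dirac_pos \<rho>))"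
proof -
  obtain w where hw: "\<And>k. hw k = (if even k then odd_dfact (k div 2) * w ^ (k div 2) else 0)"
    using hw_formula[OF qf] by blast
  define u where "u = w + \<alpha> * R"
  define v where "v = cov_wick C hw"
  have V: "\<And>k. k \<le> n \<Longrightarrow> v (2 * k) = odd_dfact k * u ^ k"
    unfolding v_def u_def by (rule cov_formula[OF hw C_even])
  have V2: "v 2 = u" using V[of 1] n_ge by (simp add: odd_dfact_def)
  have mono: "thermal_witness v n \<rho> \<Longrightarrow> thermal_witness v 1 \<rho>" for \<rho>
    using n_ge unfolding thermal_witness_def by auto
  have eq: "T_thermal v n \<longleftrightarrow> T_thermal v 1"
  proof
    assume "T_thermal v n" then show "T_thermal v 1" using mono unfolding T_thermal_def by blast
  next
    assume "T_thermal v 1"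
    then obtain \<rho> where "thermal_witness v 1 \<rho>" unfolding T_thermal_def by blast
    then have "v 2 > 0" using witness_pos by blast
    then have "u > 0" using V2 by simp
    then show "T_thermal v n" unfolding T_thermal_def using dirac_witness[of u n v] V by blast
  qed
  have dir: "n \<ge> 2 \<longrightarrow> (\<forall>\<rho>. thermal_witness v n \<rho> \<longrightarrow> is_dirac_pos \<rho>)"
  proof (intro impI allI)
    fix \<rho> assume n2: "n \<ge> 2" and W: "thermal_witness v n \<rho>"
    have "v 4 = odd_dfact 2 * u ^ 2" using V[of 2] n2 by simp
    then have "v 4 = 3 * (v 2)^2" using V2 by (simp add: odd_dfact_def numeral_eq_Suc)
    then show "is_dirac_pos \<rho>" using witness_dirac[OF W n2] by blast
  qed
  show ?thesis using eq dir unfolding v_def by blast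
qed

end
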